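(* Let $\mu\leq\nu$ and $\lambda$ be infinite cardinals with $2^{\nu^{<\mu}}\leq\lambda$. If $X_1$ is a $[\mu,\nu]$-compact topological space and $X_2$ is an initially $\lambda$-compact topological space, then $X_1\times X_2$ is $[\mu,\nu]$-compact. If moreover every cardinal in the interval $[\mu,\nu]$ is regular, the same conclusion holds under the weaker assumption $2^{\nu}\leq\lambda$ in place of $2^{\nu^{<\mu}}\leq\lambda$.
   Context: No separation axioms are assumed; all topological spaces are nonempty. For infinite cardinals $\mu\leq\nu$, a space is $[\mu,\nu]$-compact if every open cover of cardinality at most $\nu$ has a subcover of cardinality $<\mu$. A space is initially $\lambda$-compact if it is $[\omega,\lambda]$-compact. *)

theory Defs
  imports "HOL-Analysis.Analysis"
begin

unbundle cardinal_syntax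

text \<open>Cardinals are represented by sets: the set M stands for the cardinal card_of M.\<close>

definition mn_compact :: "'a topology \<Rightarrow> 'm set \<Rightarrow> 'n set \<Rightarrow> bool" where
  "mn_compact X M N \<longleftrightarrow>
     (\<forall>\<U>. (\<forall>U\<in>\<U>. openin X U) \<and> topspace X \<subseteq> \<Union>\<U> \<and> (card_of (\<U>)) \<le>o (card_of (N)) \<longrightarrow>
        (\<exists>\<V>\<subseteq>\<U>. topspace X \<subseteq> \<Union>\<V> \<and> (card_of (\<V>)) <o (card_of (M))))"

definition initially_compact :: "'a topology \<Rightarrow> 'l set \<Rightarrow> bool" where
  "initially_compact X L \<longleftrightarrow> mn_compact X (UNIV :: nat set) L"

text \<open>A set of cardinality nu^(<mu) (for mu \<le> nu infinite): partial functions from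
  M to N whose domain has cardinality less than card_of M.\<close>
definition lt_exp_set :: "'n set \<Rightarrow> 'm set \<Rightarrow> ('m \<rightharpoonup> 'n) set" where
  "lt_exp_set N M = {f. dom f \<subseteq> M \<and> ran f \<subseteq> N \<and> (card_of (dom f)) <o (card_of (M))}"

end

theory Submission
  imports Defs
begin


lemma fin_le_inf: "finite A \<Longrightarrow> infinite B \<Longrightarrow> |A| \<le>o |B|"
  by (meson card_of_Well_order card_of_ordLeq_finite not_ordLeq_iff_ordLess ordLess_imp_ordLeq)

lemma fin_less_inf: "finite A \<Longrightarrow> infinite B \<Longrightarrow> |A| <o |B|"
  by (meson card_of_Well_order card_of_ordLeq_finite not_ordLeq_iff_ordLess)

lemma less_nat_finite: "|A| <o |UNIV::nat set| \<Longrightarrow> finite A"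
proof (rule ccontr)
  assume a1: "|A| <o |UNIV::nat set|" and a2: "infinite A"
  have "|UNIV::nat set| \<le>o |A|" using infinite_iff_card_of_nat[of A] a2 by (rule iffD1)
  then show False using not_ordLess_ordLeq[OF a1] by contradiction
qed

lemma pow_mono: "|A| \<le>o |B| \<Longrightarrow> |Pow A| \<le>o |Pow B|"
proof -
  assume "|A| \<le>o |B|"
  then obtain f where f: "inj_on f A" "f ` A \<subseteq> B" unfolding card_of_ordLeq[symmetric] by blast
  have "inj_on (image f) (Pow A)" using f(1) inj_on_image_Pow by blast
  moreover have "image f ` Pow A \<subseteq> Pow B" using f(2) by auto
  ultimately show ?thesis unfolding card_of_ordLeq[symmetric] by blast
qed

lemma lists_le:
  assumes inf: "infinite A" shows "|lists A| \<le>o |A|"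
proof -
  define S where "S n = {xs \<in> lists A. length xs = n}" for n
  have "|S n| \<le>o |A|" for n
  proof (induction n)
    case 0
    have "S 0 = {[]}" unfolding S_def by auto
    then show ?case using fin_le_inf[of "{[]}" A] inf by simp
  next
    case (Suc n)
    have "S (Suc n) = (\<lambda>(a,xs). a # xs) ` (A \<times> S n)"
      unfolding S_def by (auto simp: length_Suc_conv image_iff)
    hence "|S (Suc n)| \<le>o |A \<times> S n|" using card_of_image by metis
    also have "|A \<times> S n| \<le>o |A \<times> A|" using Suc card_of_Times_mono2 by blast
    also have "|A \<times> A| =o |A|" using card_of_Times_same_infinite inf by blast
    finally show ?case using ordLeq_ordIso_trans by blast
  qed
  moreover have "lists A = (\<Union>n\<in>UNIV. S n)" unfolding S_def by auto
  moreover have "|UNIV::nat set| \<le>o |A|" using inf infinite_iff_card_of_nat by blast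
  ultimately show ?thesis using card_of_UNION_ordLeq_infinite[OF inf] by metis
qed

lemma finsets_le:
  assumes "|W| \<le>o |N|" "infinite N"
  shows "|{T. finite T \<and> T \<subseteq> W}| \<le>o |N|"
proof (cases "finite W")
  case True
  then have "finite {T. finite T \<and> T \<subseteq> W}" by (simp add: finite_subset[of _ "Pow W"] subset_iff)
  then show ?thesis using fin_le_inf assms by blast
next
  case False
  have "{T. finite T \<and> T \<subseteq> W} \<subseteq> set ` lists W"
    by (auto simp: image_iff) (metis finite_list in_listsI subset_code(1))
  hence "|{T. finite T \<and> T \<subseteq> W}| \<le>o |set ` lists W|" by (rule card_of_mono1)
  also have "|set ` lists W| \<le>o |lists W|" by (rule card_of_image)
  also have "|lists W| \<le>o |W|" using lists_le False by blast
  finally show ?thesis using assms(1) ordLeq_transitive by blast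
qed

lemma finunion_less:
  assumes "infinite M" "|\<T>| <o |M|" "\<forall>T\<in>\<T>. finite T"
  shows "|\<Union>\<T>| <o |M|"
proof (cases "finite \<T>")
  case True then show ?thesis using assms fin_less_inf[of "\<Union>\<T>" M] by auto
next
  case False
  have "|\<Union>T\<in>\<T>. T| \<le>o |\<T>|"
    using card_of_UNION_ordLeq_infinite[OF False, of \<T> "\<lambda>T. T"] assms(3) fin_le_inf[OF _ False] 
    by (meson card_of_refl ordIso_iff_ordLeq)
  then show ?thesis using assms(2) ordLeq_ordLess_trans by auto
qed



lemma core:
  fixes X1 :: "'a topology" and X2 :: "'b topology" and M :: "'m set" and N :: "'n set"
    and L :: "'l set" and I :: "'i set" and W :: "('a \<times> 'b) set set"
  assumes mn: "mn_compact X1 M N" and ic: "initially_compact X2 L" and infN: "infinite N"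
    and Wopen: "\<forall>w\<in>W. openin (prod_topology X1 X2) w"
    and Wcov: "topspace X1 \<times> topspace X2 \<subseteq> \<Union>W"
    and Wcard: "|W| \<le>o |N|"
    and C: "\<forall>i\<in>I. C i \<subseteq> W"
    and p: "\<forall>i\<in>I. p i \<in> topspace X1 \<times> topspace X2 \<and> p i \<notin> \<Union>(C i)"
    and dir: "\<forall>\<T>. \<T> \<subseteq> {T. finite T \<and> T \<subseteq> W} \<and> |\<T>| <o |M| \<longrightarrow> (\<exists>i\<in>I. \<forall>T\<in>\<T>. T \<subseteq> C i)"
    and PI: "|Pow I| \<le>o |L|"
  shows False
proof -
  define F where "F = {T. finite T \<and> T \<subseteq> W}"
  have "\<exists>x\<in>topspace X1. \<forall>T\<in>F. \<forall>U. openin X1 U \<and> x \<in> U \<longrightarrow> (\<exists>i\<in>I. T \<subseteq> C i \<and> fst (p i) \<in> U)"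
  proof (rule ccontr)
    assume neg: "\<not> ?thesis"
    define G where "G T = \<Union>{U. openin X1 U \<and> (\<forall>i\<in>I. T \<subseteq> C i \<longrightarrow> fst (p i) \<notin> U)}" for T
    have "openin X1 (G T)" for T unfolding G_def by (rule openin_Union) blast
    hence Gop: "\<forall>U\<in>G ` F. openin X1 U" by simp
    have Gcov: "topspace X1 \<subseteq> \<Union>(G ` F)"
    proof
      fix x assume x: "x \<in> topspace X1"
      have "\<not> (\<forall>T\<in>F. \<forall>U. openin X1 U \<and> x \<in> U \<longrightarrow> (\<exists>i\<in>I. T \<subseteq> C i \<and> fst (p i) \<in> U))"
      proof
        assume h: "\<forall>T\<in>F. \<forall>U. openin X1 U \<and> x \<in> U \<longrightarrow> (\<exists>i\<in>I. T \<subseteq> C i \<and> fst (p i) \<in> U)"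
        have "\<exists>x\<in>topspace X1. \<forall>T\<in>F. \<forall>U. openin X1 U \<and> x \<in> U \<longrightarrow> (\<exists>i\<in>I. T \<subseteq> C i \<and> fst (p i) \<in> U)"
          using h x by (rule bexI[of _ x])
        then show False using neg by contradiction
      qed
      then obtain T U where TU: "T \<in> F" "openin X1 U" "x \<in> U" "\<not> (\<exists>i\<in>I. T \<subseteq> C i \<and> fst (p i) \<in> U)"
        by blast
      hence "U \<in> {U. openin X1 U \<and> (\<forall>i\<in>I. T \<subseteq> C i \<longrightarrow> fst (p i) \<notin> U)}" by blast
      hence "x \<in> G T" unfolding G_def using TU(3) by (rule UnionI)
      then show "x \<in> \<Union>(G ` F)" using TU(1) by (rule UN_I[rotated])
    qed
    have "|G ` F| \<le>o |F|" by (rule card_of_image)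
    moreover have "|F| \<le>o |N|" unfolding F_def using finsets_le Wcard infN by blast
    ultimately have Gcard: "|G ` F| \<le>o |N|" using ordLeq_transitive by blast
    have "(\<forall>U\<in>G ` F. openin X1 U) \<and> topspace X1 \<subseteq> \<Union>(G ` F) \<and> |G ` F| \<le>o |N|"
      using Gop Gcov Gcard by blast
    with mn[unfolded mn_compact_def, THEN spec[of _ "G ` F"]]
    have "\<exists>V\<subseteq>G ` F. topspace X1 \<subseteq> \<Union>V \<and> |V| <o |M|" by (rule mp)
    then obtain V where V: "V \<subseteq> G ` F" "topspace X1 \<subseteq> \<Union>V" "|V| <o |M|" by blast
    from V(1)[unfolded subset_image_iff] obtain \<T> where T: "\<T> \<subseteq> F" "V = G ` \<T>" by blast
    have "\<forall>v\<in>V. \<exists>T. T \<in> \<T> \<and> G T = v" using T(2) by blast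
    from bchoice[OF this] obtain g where g: "\<forall>v\<in>V. g v \<in> \<T> \<and> G (g v) = v" by blast
    define \<T>' where "\<T>' = g ` V"
    have "|\<T>'| \<le>o |V|" unfolding \<T>'_def by (rule card_of_image)
    hence T'card: "|\<T>'| <o |M|" using V(3) ordLeq_ordLess_trans by blast
    have "\<T>' \<subseteq> F" using g T(1) unfolding \<T>'_def by auto
    hence "\<T>' \<subseteq> {T. finite T \<and> T \<subseteq> W} \<and> |\<T>'| <o |M|" using T'card unfolding F_def by blast
    with dir[THEN spec[of _ "\<T>'"]] have "\<exists>i\<in>I. \<forall>T\<in>\<T>'. T \<subseteq> C i" by (rule mp)
    then obtain i where i: "i \<in> I" "\<forall>T\<in>\<T>'. T \<subseteq> C i" by blast
    have "fst (p i) \<in> topspace X1" using p i(1) by auto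
    then obtain v where v: "v \<in> V" "fst (p i) \<in> v" using V(2) by blast
    have "g v \<in> \<T>'" using v(1) unfolding \<T>'_def by auto
    hence "g v \<subseteq> C i" using i by blast
    moreover have "fst (p i) \<in> G (g v)" using g v by auto
    ultimately show False using i(1) unfolding G_def by blast
  qed
  then obtain x where x: "x \<in> topspace X1"
    "\<forall>T\<in>F. \<forall>U. openin X1 U \<and> x \<in> U \<longrightarrow> (\<exists>i\<in>I. T \<subseteq> C i \<and> fst (p i) \<in> U)" by blast
  define A where "A T U = {i\<in>I. T \<subseteq> C i \<and> fst (p i) \<in> U}" for T U
  define \<A> where "\<A> = {A T U | T U. T \<in> F \<and> openin X1 U \<and> x \<in> U}"
  define Z where "Z B = X2 closure_of (snd ` p ` B)" for B
  have "\<exists>y\<in>topspace X2. \<forall>B\<in>\<A>. y \<in> Z B"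
  proof (rule ccontr)
    assume neg: "\<not> ?thesis"
    define Q where "Q = (\<lambda>B. topspace X2 - Z B) ` \<A>"
    have Oop: "\<forall>U\<in>Q. openin X2 U" unfolding Q_def Z_def by (simp add: openin_diff)
    have Ocov: "topspace X2 \<subseteq> \<Union>Q" using neg unfolding Q_def by blast
    have "|Q| \<le>o |\<A>|" unfolding Q_def by (rule card_of_image)
    moreover have "|\<A>| \<le>o |Pow I|" by (rule card_of_mono1) (auto simp: \<A>_def A_def)
    ultimately have "|Q| \<le>o |Pow I|" by (rule ordLeq_transitive)
    hence Ocard: "|Q| \<le>o |L|" using PI by (rule ordLeq_transitive)
    have "(\<forall>U\<in>Q. openin X2 U) \<and> topspace X2 \<subseteq> \<Union>Q \<and> |Q| \<le>o |L|"
      using Oop Ocov Ocard by blast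
    with ic[unfolded initially_compact_def mn_compact_def, THEN spec[of _ Q]]
    have "\<exists>V\<subseteq>Q. topspace X2 \<subseteq> \<Union>V \<and> |V| <o |UNIV::nat set|" by (rule mp)
    then obtain V where V: "V \<subseteq> Q" "topspace X2 \<subseteq> \<Union>V" "|V| <o |UNIV::nat set|" by blast
    have Vfin: "finite V" using V(3) less_nat_finite by blast
    obtain \<A>0 where A0: "\<A>0 \<subseteq> \<A>" "finite \<A>0" "V = (\<lambda>B. topspace X2 - Z B) ` \<A>0"
      using finite_subset_image[OF Vfin V(1)[unfolded Q_def]] by blast
    have "\<forall>B\<in>\<A>0. \<exists>TU. B = A (fst TU) (snd TU) \<and> fst TU \<in> F \<and> openin X1 (snd TU) \<and> x \<in> snd TU"
    proof
      fix B assume "B \<in> \<A>0"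
      then obtain T U where "B = A T U" "T \<in> F" "openin X1 U" "x \<in> U" using A0(1) unfolding \<A>_def by blast
      then show "\<exists>TU. B = A (fst TU) (snd TU) \<and> fst TU \<in> F \<and> openin X1 (snd TU) \<and> x \<in> snd TU"
        by (intro exI[of _ "(T,U)"]) simp
    qed
    from bchoice[OF this] obtain h where h: "\<forall>B\<in>\<A>0. B = A (fst (h B)) (snd (h B)) \<and> fst (h B) \<in> F \<and> openin X1 (snd (h B)) \<and> x \<in> snd (h B)"
      by blast
    define T0 where "T0 = \<Union>((\<lambda>B. fst (h B)) ` \<A>0)"
    define U0 where "U0 = topspace X1 \<inter> \<Inter>((\<lambda>B. snd (h B)) ` \<A>0)"
    have "T0 \<in> F" using h A0(2) unfolding T0_def F_def by auto
    moreover have "openin X1 U0" unfolding U0_def using h A0(2)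
      by (intro openin_Int_Inter) auto
    moreover have "x \<in> U0" using h x(1) unfolding U0_def by auto
    ultimately have "\<exists>i\<in>I. T0 \<subseteq> C i \<and> fst (p i) \<in> U0" using x(2) by simp
    then obtain i where i: "i \<in> I" "T0 \<subseteq> C i" "fst (p i) \<in> U0" by blast
    have "snd (p i) \<in> topspace X2" using p i(1) by auto
    then obtain B where B: "B \<in> \<A>0" "snd (p i) \<notin> Z B" using V(2) A0(3) by blast
    have hB: "B = A (fst (h B)) (snd (h B))" using h B(1) by blast
    have "fst (h B) \<subseteq> T0" unfolding T0_def using B(1) by blast
    moreover have "U0 \<subseteq> snd (h B)" unfolding U0_def using B(1) by blast
    ultimately have "i \<in> A (fst (h B)) (snd (h B))" unfolding A_def using i by blast
    hence "i \<in> B" using hB by simp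
    moreover have "B \<subseteq> I" using h B(1) unfolding A_def by blast
    hence "snd ` p ` B \<subseteq> topspace X2" using p by (auto simp: mem_Times_iff)
    hence "snd ` p ` B \<subseteq> Z B" unfolding Z_def by (rule closure_of_subset)
    ultimately have "snd (p i) \<in> Z B" by blast
    then show False using B(2) by blast
  qed
  then obtain y where y: "y \<in> topspace X2" "\<forall>B\<in>\<A>. y \<in> Z B" by blast
  obtain w where w: "w \<in> W" "(x,y) \<in> w" using Wcov x(1) y(1) by blast
  have "openin (prod_topology X1 X2) w" using Wopen w by blast
  then obtain U V where UV: "openin X1 U" "openin X2 V" "x \<in> U" "y \<in> V" "U \<times> V \<subseteq> w"
    using w(2) unfolding openin_prod_topology_alt by blast
  have "{w} \<in> F" using w unfolding F_def by auto
  hence "A {w} U \<in> \<A>" using UV unfolding \<A>_def by blast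
  hence "y \<in> X2 closure_of (snd ` p ` A {w} U)" using y unfolding Z_def by blast
  then obtain q where "q \<in> snd ` p ` A {w} U" "q \<in> V" using UV(2,4) unfolding in_closure_of by blast
  then obtain i where i: "i \<in> I" "w \<in> C i" "fst (p i) \<in> U" "snd (p i) \<in> V" unfolding A_def by auto
  hence "p i \<in> w" using UV(5) by (metis mem_Sigma_iff prod.collapse subsetD)
  then show False using p i by blast
qed



lemma insert_less:
  assumes "infinite B" "|X| <o |B|" shows "|insert a X| <o |B|"
proof (cases "finite X")
  case True then show ?thesis using fin_less_inf[of "insert a X" B] assms by simp
next
  case False
  have "|\<Union>Y\<in>{X,{a}}. Y| \<le>o |X|"
  proof -
    have "|{X,{a}}| \<le>o |X|" by (rule fin_le_inf[OF _ False]) simp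
    moreover have "\<forall>i\<in>{X, {a}}. |i| \<le>o |X|"
      using fin_le_inf[OF _ False, of "{a}"] card_of_refl ordIso_iff_ordLeq by auto
    ultimately show ?thesis using card_of_UNION_ordLeq_infinite[OF False, of "{X,{a}}" "\<lambda>Y. Y"] by blast
  qed
  moreover have "(\<Union>Y\<in>{X,{a}}. Y) = insert a X" by auto
  ultimately show ?thesis using assms(2) ordLeq_ordLess_trans by metis
qed

lemma encode:
  assumes "|B| <o |M|" shows "\<exists>\<phi>. dom \<phi> \<subseteq> M \<and> ran \<phi> = B \<and> |dom \<phi>| <o |M|"
proof -
  have "|B| \<le>o |M|" using assms by (rule ordLess_imp_ordLeq)
  then obtain e where e: "inj_on e B" "e ` B \<subseteq> M" unfolding card_of_ordLeq[symmetric] by blast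
  define \<phi> where "\<phi> m = (if m \<in> e ` B then Some (the_inv_into B e m) else None)" for m
  have d: "dom \<phi> = e ` B" unfolding \<phi>_def dom_def by auto
  have "ran \<phi> = B"
  proof
    show "ran \<phi> \<subseteq> B"
    proof
      fix b assume "b \<in> ran \<phi>"
      then obtain m where "\<phi> m = Some b" unfolding ran_def by blast
      hence "m \<in> e ` B" "b = the_inv_into B e m" unfolding \<phi>_def by (auto split: if_splits)
      then show "b \<in> B" using the_inv_into_into[OF e(1)] by blast
    qed
    show "B \<subseteq> ran \<phi>"
    proof
      fix b assume b: "b \<in> B"
      hence "\<phi> (e b) = Some b" unfolding \<phi>_def using the_inv_into_f_f[OF e(1) b] by simp
      then show "b \<in> ran \<phi>" unfolding ran_def by blast
    qed
  qed
  moreover have "|dom \<phi>| <o |M|" unfolding d using card_of_image assms by (rule ordLeq_ordLess_trans)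
  ultimately show ?thesis using d e(2) by blast
qed



theorem proposition3p2:
  fixes M :: "'m set" and N :: "'n set" and L :: "'l set"
    and X1 :: "'a topology" and X2 :: "'b topology"
  assumes "infinite M" and "infinite N" and "infinite L"
    and "(card_of (M)) \<le>o (card_of (N))"
    and "topspace X1 \<noteq> {}" and "topspace X2 \<noteq> {}"
    and "mn_compact X1 M N"
    and "initially_compact X2 L"
  shows "((card_of (Pow (lt_exp_set N M))) \<le>o (card_of (L)) \<longrightarrow> mn_compact (prod_topology X1 X2) M N)
       \<and> ((\<forall>K\<subseteq>N. (card_of (M)) \<le>o (card_of (K)) \<longrightarrow> regularCard (card_of (K))) \<and> (card_of (Pow N)) \<le>o (card_of (L))
            \<longrightarrow> mn_compact (prod_topology X1 X2) M N)"
proof (intro conjI impI)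
  assume PL: "|Pow (lt_exp_set N M)| \<le>o |L|"
  show "mn_compact (prod_topology X1 X2) M N"
    unfolding mn_compact_def
  proof (intro allI impI)
    fix U :: "('a \<times> 'b) set set"
    assume U: "(\<forall>u\<in>U. openin (prod_topology X1 X2) u) \<and> topspace (prod_topology X1 X2) \<subseteq> \<Union>U \<and> |U| \<le>o |N|"
    show "\<exists>V\<subseteq>U. topspace (prod_topology X1 X2) \<subseteq> \<Union>V \<and> |V| <o |M|"
    proof (rule ccontr)
      assume neg: "\<not> ?thesis"
      define I where "I = {S. S \<subseteq> U \<and> |S| <o |M|}"
      define p where "p S = (SOME q. q \<in> topspace X1 \<times> topspace X2 \<and> q \<notin> \<Union>S)" for S
      have p: "\<forall>S\<in>I. p S \<in> topspace X1 \<times> topspace X2 \<and> p S \<notin> \<Union>(id S)"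
      proof
        fix S assume "S \<in> I"
        hence "\<not> topspace X1 \<times> topspace X2 \<subseteq> \<Union>S" using neg unfolding I_def by auto
        hence "\<exists>q. q \<in> topspace X1 \<times> topspace X2 \<and> q \<notin> \<Union>S" by blast
        then show "p S \<in> topspace X1 \<times> topspace X2 \<and> p S \<notin> \<Union>(id S)"
          unfolding p_def id_def by (rule someI_ex)
      qed
      have dir: "\<forall>\<T>. \<T> \<subseteq> {T. finite T \<and> T \<subseteq> U} \<and> |\<T>| <o |M| \<longrightarrow> (\<exists>i\<in>I. \<forall>T\<in>\<T>. T \<subseteq> id i)"
      proof (intro allI impI)
        fix \<T> assume T: "\<T> \<subseteq> {T. finite T \<and> T \<subseteq> U} \<and> |\<T>| <o |M|"
        hence "|\<Union>\<T>| <o |M|" using finunion_less[OF assms(1), of \<T>] by blast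
        moreover have "\<Union>\<T> \<subseteq> U" using T by blast
        ultimately show "\<exists>i\<in>I. \<forall>T\<in>\<T>. T \<subseteq> id i" unfolding I_def by auto
      qed
      have "|U| \<le>o |N|" using U by blast
      then obtain f where f: "inj_on f U" "f ` U \<subseteq> N" unfolding card_of_ordLeq[symmetric] by blast
      have "\<forall>S\<in>I. \<exists>\<phi>. dom \<phi> \<subseteq> M \<and> ran \<phi> = f ` S \<and> |dom \<phi>| <o |M|"
      proof
        fix S assume "S \<in> I"
        hence "|S| <o |M|" unfolding I_def by blast
        hence "|f ` S| <o |M|" by (rule ordLeq_ordLess_trans[OF card_of_image])
        then show "\<exists>\<phi>. dom \<phi> \<subseteq> M \<and> ran \<phi> = f ` S \<and> |dom \<phi>| <o |M|" by (rule encode)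
      qed
      from bchoice[OF this] obtain \<Phi> where \<Phi>: "\<forall>S\<in>I. dom (\<Phi> S) \<subseteq> M \<and> ran (\<Phi> S) = f ` S \<and> |dom (\<Phi> S)| <o |M|"
        by blast
      have "inj_on \<Phi> I"
      proof (rule inj_onI)
        fix S S' assume "S \<in> I" "S' \<in> I" "\<Phi> S = \<Phi> S'"
        hence "ran (\<Phi> S) = ran (\<Phi> S')" by simp
        hence "f ` S = f ` S'" using \<Phi> \<open>S \<in> I\<close> \<open>S' \<in> I\<close> by simp
        moreover have "S \<subseteq> U" "S' \<subseteq> U" using \<open>S \<in> I\<close> \<open>S' \<in> I\<close> unfolding I_def by auto
        ultimately show "S = S'" using inj_on_image_eq_iff[OF f(1)] by blast
      qed
      moreover have "\<Phi> ` I \<subseteq> lt_exp_set N M"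
      proof
        fix g assume "g \<in> \<Phi> ` I"
        then obtain S where S: "S \<in> I" "g = \<Phi> S" by blast
        hence "S \<subseteq> U" unfolding I_def by blast
        hence "f ` S \<subseteq> N" using f(2) by blast
        hence "ran g \<subseteq> N" using S \<Phi> by simp
        then show "g \<in> lt_exp_set N M" using S \<Phi> unfolding lt_exp_set_def by auto
      qed
      ultimately have "|I| \<le>o |lt_exp_set N M|" unfolding card_of_ordLeq[symmetric] by blast
      hence "|Pow I| \<le>o |L|" by (rule ordLeq_transitive[OF pow_mono PL])
      moreover have "\<forall>S\<in>I. id S \<subseteq> U" unfolding I_def by auto
      moreover have "topspace X1 \<times> topspace X2 \<subseteq> \<Union>U" using U by simp
      moreover have "|U| \<le>o |N|" "\<forall>u\<in>U. openin (prod_topology X1 X2) u" using U by blast+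
      ultimately show False
        using core[OF assms(7) assms(8) assms(2), of U I id p] p dir by blast
    qed
  qed
next
  assume R: "(\<forall>K\<subseteq>N. |M| \<le>o |K| \<longrightarrow> regularCard |K| ) \<and> |Pow N| \<le>o |L|"
  show "mn_compact (prod_topology X1 X2) M N"
    unfolding mn_compact_def
  proof (intro allI impI)
    fix U :: "('a \<times> 'b) set set"
    assume U: "(\<forall>u\<in>U. openin (prod_topology X1 X2) u) \<and> topspace (prod_topology X1 X2) \<subseteq> \<Union>U \<and> |U| \<le>o |N|"
    define \<R> where "\<R> = {|V| | V. V \<subseteq> U \<and> topspace (prod_topology X1 X2) \<subseteq> \<Union>V}"
    have "\<R> \<noteq> {}" using U unfolding \<R>_def by blast
    moreover have "\<forall>r\<in>\<R>. Well_order r" unfolding \<R>_def using card_of_Well_order by blast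
    ultimately obtain r where r: "r \<in> \<R>" "\<forall>r'\<in>\<R>. r \<le>o r'" using exists_minim_Well_order by blast
    then obtain V0 where V0: "r = |V0|" "V0 \<subseteq> U" "topspace (prod_topology X1 X2) \<subseteq> \<Union>V0"
      unfolding \<R>_def by blast
    have min: "\<And>V. V \<subseteq> U \<Longrightarrow> topspace (prod_topology X1 X2) \<subseteq> \<Union>V \<Longrightarrow> |V0| \<le>o |V|"
      using r(2) V0(1) unfolding \<R>_def by blast
    show "\<exists>V\<subseteq>U. topspace (prod_topology X1 X2) \<subseteq> \<Union>V \<and> |V| <o |M|"
    proof (rule ccontr)
      assume neg: "\<not> ?thesis"
      have "\<not> |V0| <o |M|" using neg V0(2,3) by blast
      hence MV: "|M| \<le>o |V0|" using not_ordLess_iff_ordLeq[OF card_of_Well_order[of M] card_of_Well_order[of V0]] by blast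
      have infV: "infinite V0" by (rule card_of_ordLeq_infinite[OF MV assms(1)])
      have "|U| \<le>o |N|" using U by blast
      hence VN: "|V0| \<le>o |N|" by (rule ordLeq_transitive[OF card_of_mono1[OF V0(2)]])
      then obtain f where f: "inj_on f V0" "f ` V0 \<subseteq> N" unfolding card_of_ordLeq[symmetric] by blast
      have "bij_betw f V0 (f ` V0)" using f(1) by (rule inj_on_imp_bij_betw)
      hence "|V0| =o |f ` V0|" unfolding card_of_ordIso[symmetric] by blast
      hence iso: "|f ` V0| =o |V0|" by (rule ordIso_symmetric)
      have "|M| \<le>o |f ` V0|" by (rule ordLeq_ordIso_trans[OF MV ordIso_symmetric[OF iso]])
      hence "regularCard |f ` V0|" using R[THEN conjunct1, rule_format, OF f(2)] by blast
      moreover have "Cinfinite |f ` V0|"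
        using infV f(1) finite_image_iff card_of_Card_order[of "f ` V0"] unfolding cinfinite_def Field_card_of
        by auto
      ultimately have reg: "regularCard |V0|" using regularCard_ordIso[OF iso] by blast
      define r0 where "r0 = |V0|"
      have Fr: "Field r0 = V0" unfolding r0_def by (rule Field_card_of)
      have wo: "wo_rel r0" unfolding r0_def wo_rel_def by (rule card_of_Well_order)
      have small_under: "|under r0 w| <o |V0|" if "w \<in> V0" for w
      proof -
        have "|underS r0 w| <o r0" unfolding r0_def
          by (rule card_of_underS[OF card_of_Card_order]) (simp add: that Field_card_of)
        hence "|insert w (underS r0 w)| <o |V0|" unfolding r0_def by (rule insert_less[OF infV])
        moreover have "under r0 w \<subseteq> insert w (underS r0 w)" unfolding under_def underS_def by auto
        ultimately show ?thesis by (rule ordLeq_ordLess_trans[OF card_of_mono1, rotated])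
      qed
      have pex: "\<forall>w\<in>V0. \<exists>q. q \<in> topspace X1 \<times> topspace X2 \<and> q \<notin> \<Union>(under r0 w)"
      proof
        fix w assume w: "w \<in> V0"
        have sub: "under r0 w \<subseteq> U" using under_Field[of r0 w] Fr V0(2) by blast
        show "\<exists>q. q \<in> topspace X1 \<times> topspace X2 \<and> q \<notin> \<Union>(under r0 w)"
        proof (rule ccontr)
          assume "\<not> ?thesis"
          hence "topspace (prod_topology X1 X2) \<subseteq> \<Union>(under r0 w)" by auto
          hence "|V0| \<le>o |under r0 w|" using min sub by blast
          then show False using not_ordLess_ordLeq[OF small_under[OF w]] by contradiction
        qed
      qed
      obtain p where p: "\<forall>w\<in>V0. p w \<in> topspace X1 \<times> topspace X2 \<and> p w \<notin> \<Union>(under r0 w)"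
        by (rule exE[OF bchoice[OF pex]])
      have dir: "\<forall>\<T>. \<T> \<subseteq> {T. finite T \<and> T \<subseteq> V0} \<and> |\<T>| <o |M| \<longrightarrow> (\<exists>i\<in>V0. \<forall>T\<in>\<T>. T \<subseteq> under r0 i)"
      proof (intro allI impI)
        fix \<T> assume T: "\<T> \<subseteq> {T. finite T \<and> T \<subseteq> V0} \<and> |\<T>| <o |M|"
        hence "|\<T>| <o |V0|" using ordLess_ordLeq_trans[OF _ MV] by blast
        hence Ssmall: "|\<Union>\<T>| <o |V0|" using finunion_less[OF infV, of \<T>] T by blast
        have "\<T> \<subseteq> {T. finite T \<and> T \<subseteq> V0}" using T by (rule conjunct1)
        hence Ssub: "\<Union>\<T> \<subseteq> Field r0" unfolding Fr by blast
        have "\<not> cofinal (\<Union>\<T>) r0"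
        proof
          assume cof: "cofinal (\<Union>\<T>) r0"
          have "\<Union>\<T> \<subseteq> Field |V0| \<and> cofinal (\<Union>\<T>) |V0|" using Ssub cof unfolding r0_def by blast
          hence "|\<Union>\<T>| =o |V0|" by (rule reg[unfolded regularCard_def, rule_format])
          then show False using not_ordLess_ordIso[OF Ssmall] by contradiction
        qed
        then obtain a where a: "a \<in> Field r0" "\<forall>b\<in>\<Union>\<T>. a = b \<or> (a,b) \<notin> r0"
          unfolding cofinal_def by blast
        have "\<Union>\<T> \<subseteq> under r0 a"
        proof
          fix b assume b: "b \<in> \<Union>\<T>"
          hence bF: "b \<in> Field r0" using Ssub by blast
          have "(a,b) \<in> r0 \<or> (b,a) \<in> r0" using wo_rel.TOTALS[OF wo] a(1) bF by blast
          moreover have "a = b \<or> (a,b) \<notin> r0" using a(2) b by blast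
          ultimately show "b \<in> under r0 a" unfolding under_def by blast
        qed
        moreover have "a \<in> V0" using a(1) unfolding Fr .
        ultimately show "\<exists>i\<in>V0. \<forall>T\<in>\<T>. T \<subseteq> under r0 i" by blast
      qed
      have "|Pow N| \<le>o |L|" using R by blast
      hence "|Pow V0| \<le>o |L|" by (rule ordLeq_transitive[OF pow_mono[OF VN]])
      moreover have "\<forall>w\<in>V0. under r0 w \<subseteq> V0" using under_Field[of r0] unfolding Fr by blast
      moreover have "\<forall>w\<in>V0. openin (prod_topology X1 X2) w" using U V0(2) by blast
      moreover have "topspace X1 \<times> topspace X2 \<subseteq> \<Union>V0" using V0(3) by simp
      ultimately show False
        using core[OF assms(7) assms(8) assms(2), of V0 V0 "under r0" p] VN p dir by blast
    qed
  qed
qed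


end
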